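(* Let $a,b\in\mathbb{C}$ with $b\neq0$, and suppose $\cdot_\lambda\cdot$ is a compatible left-symmetric conformal algebraic structure on $\mathcal{W}(a,b)=\mathbb{C}[\partial]L\oplus\mathbb{C}[\partial]W$ such that $\mathbb{C}[\partial]L$ is a left-symmetric conformal subalgebra. Let $c\in\mathbb{C}$ with $L_\lambda L=(\partial+\lambda+c)L$, and write $L_\lambda W=g_1L+g_2W$, $W_\lambda L=h_1L+h_2W$, $W_\lambda W=k_1L+k_2W$ with $g_i,h_i,k_i\in\mathbb{C}[\lambda,\partial]$. Assume $c\neq0$, $g_2(\lambda,\partial)=\partial+a\lambda+b+c$ and $h_2(\lambda,\partial)=c$. Then one of the following holds: (B1) $h_1=g_1=k_1=k_2=0$ (and $g_2=\partial+a\lambda+b+c$, $h_2=c$); (B2) $a=1$, $c=b$, $g_2=\partial+\lambda+2b$, $h_2=b$, $g_1=h_1=d$, $k_1=-\frac{d^2}{b}$, $k_2=-d$, for some constant $d\in\mathbb{C}\setminus\{0\}$.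
   Context: A conformal algebra is a $\mathbb{C}[\partial]$-module $R$ with a $\mathbb{C}$-bilinear map $R\times R\to R[\lambda]$, $(x,y)\mapsto x_\lambda y$, satisfying $(\partial x)_\lambda y=-\lambda\, x_\lambda y$ and $x_\lambda(\partial y)=(\partial+\lambda)\,x_\lambda y$. For $x,y\in R$, $y_{-\lambda-\partial}x$ means: write $y_\mu x=\sum_j \mu^j z_j$ and set $y_{-\lambda-\partial}x=\sum_j(-\lambda-\partial)^j z_j$. A left-symmetric conformal algebra is a conformal algebra with $(x_\lambda y)_{\lambda+\mu}z-x_\lambda(y_\mu z)=(y_\mu x)_{\lambda+\mu}z-y_\mu(x_\lambda z)$. A compatible left-symmetric conformal algebraic structure on a Lie conformal algebra $(R,[\cdot_\lambda\cdot])$ is a left-symmetric conformal product on the same $\mathbb{C}[\partial]$-module with $x_\lambda y-y_{-\lambda-\partial}x=[x_\lambda y]$ for all $x,y$. $\mathcal{W}(a,b)$ is the free $\mathbb{C}[\partial]$-module with basis $L,W$ and Lie conformal brackets $[L_\lambda L]=(\partial+2\lambda)L$, $[L_\lambda W]=(\partial+a\lambda+b)W$, $[W_\lambda W]=0$. "$\mathbb{C}[\partial]L$ is a left-symmetric conformal subalgebra" means $L_\lambda L\in(\mathbb{C}[\partial]L)[\lambda]$; in that case $L_\lambda L=(\partial+\lambda+c)L$ for some $c\in\mathbb{C}$. *)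

theory Defs
  imports "HOL-Computational_Algebra.Polynomial"
begin

datatype gen = GL | GW

definition bipoly :: "(complex \<Rightarrow> complex \<Rightarrow> complex) \<Rightarrow> bool" where
  "bipoly f \<longleftrightarrow> (\<exists>n (c::nat \<Rightarrow> nat \<Rightarrow> complex).
      \<forall>x y. f x y = (\<Sum>i\<le>n. \<Sum>j\<le>n. c i j * x ^ i * y ^ j))"

text \<open>A lambda-product on the free module C[\<partial>]L + C[\<partial>]W is determined by a
  table T: T u v w lam d is the coefficient (a polynomial in lambda, partial) of the
  generator w in u_lambda v.  Elements are given by coefficient functions
  X :: gen => (complex => complex) (the coefficient of each generator, as a function of
  partial).  The product of general elements is obtained by conformal sesquilinearity:
  (p(\<partial>)u)_lam (q(\<partial>)v) = p(-lam) q(\<partial>+lam) u_lam v.\<close>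
definition lprod ::
  "(gen \<Rightarrow> gen \<Rightarrow> gen \<Rightarrow> complex \<Rightarrow> complex \<Rightarrow> complex) \<Rightarrow>
   (gen \<Rightarrow> complex \<Rightarrow> complex) \<Rightarrow> (gen \<Rightarrow> complex \<Rightarrow> complex) \<Rightarrow>
   complex \<Rightarrow> complex \<Rightarrow> gen \<Rightarrow> complex" where
  "lprod T X Y lam d w =
     (\<Sum>u\<in>{GL, GW}. \<Sum>v\<in>{GL, GW}. X u (- lam) * Y v (d + lam) * T u v w lam d)"

definition coef :: "(gen \<Rightarrow> complex poly) \<Rightarrow> gen \<Rightarrow> complex \<Rightarrow> complex" where
  "coef x u t = poly (x u) t"

definition left_symmetric :: "(gen \<Rightarrow> gen \<Rightarrow> gen \<Rightarrow> complex \<Rightarrow> complex \<Rightarrow> complex) \<Rightarrow> bool" where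
  "left_symmetric T \<longleftrightarrow>
    (\<forall>(x::gen \<Rightarrow> complex poly) y z lam mu d w.
       lprod T (\<lambda>u t. lprod T (coef x) (coef y) lam t u) (coef z) (lam + mu) d w
       - lprod T (coef x) (\<lambda>v t. lprod T (coef y) (coef z) mu t v) lam d w
     = lprod T (\<lambda>u t. lprod T (coef y) (coef x) mu t u) (coef z) (lam + mu) d w
       - lprod T (coef y) (\<lambda>v t. lprod T (coef x) (coef z) lam t v) mu d w)"

text \<open>Bracket table of the Lie conformal algebra W(a,b):
  [L_lam L] = (\<partial>+2lam)L, [L_lam W] = (\<partial>+a lam+b)W, [W_lam W] = 0, and by skew-symmetry
  [W_lam L] = -[L_(-lam-\<partial>) W] = -(\<partial> + a(-lam-\<partial>) + b) W.\<close>
definition Wab :: "complex \<Rightarrow> complex \<Rightarrow> gen \<Rightarrow> gen \<Rightarrow> gen \<Rightarrow> complex \<Rightarrow> complex \<Rightarrow> complex" where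
  "Wab a b u v w lam d =
     (case (u, v, w) of
        (GL, GL, GL) \<Rightarrow> d + 2 * lam
      | (GL, GW, GW) \<Rightarrow> d + a * lam + b
      | (GW, GL, GW) \<Rightarrow> - (d + a * (- lam - d) + b)
      | _ \<Rightarrow> 0)"

definition compatible :: "complex \<Rightarrow> complex \<Rightarrow> (gen \<Rightarrow> gen \<Rightarrow> gen \<Rightarrow> complex \<Rightarrow> complex \<Rightarrow> complex) \<Rightarrow> bool" where
  "compatible a b T \<longleftrightarrow>
    (\<forall>(x::gen \<Rightarrow> complex poly) y lam d w.
       lprod T (coef x) (coef y) lam d w - lprod T (coef y) (coef x) (- lam - d) d w
       = lprod (Wab a b) (coef x) (coef y) lam d w)"

end

theory Submission imports Defs begin
definition e :: "gen \<Rightarrow> gen \<Rightarrow> complex poly" where "e g = (\<lambda>u. if u = g then 1 else 0)"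
lemma coef_e: "coef (e g) u t = (if u = g then 1 else 0)" by (simp add: coef_def e_def)

lemma LS:
  assumes "left_symmetric T"
  shows "(\<Sum>u\<in>{GL,GW}. T p q u lam (-(lam+mu)) * T u r w (lam+mu) d) - (\<Sum>v\<in>{GL,GW}. T q r v mu (d+lam) * T p v w lam d)
       = (\<Sum>u\<in>{GL,GW}. T q p u mu (-(lam+mu)) * T u r w (lam+mu) d) - (\<Sum>v\<in>{GL,GW}. T p r v lam (d+mu) * T q v w mu d)"
proof -
  have "lprod T (\<lambda>u t. lprod T (coef (e p)) (coef (e q)) lam t u) (coef (e r)) (lam + mu) d w
       - lprod T (coef (e p)) (\<lambda>v t. lprod T (coef (e q)) (coef (e r)) mu t v) lam d w
     = lprod T (\<lambda>u t. lprod T (coef (e q)) (coef (e p)) mu t u) (coef (e r)) (lam + mu) d w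
       - lprod T (coef (e q)) (\<lambda>v t. lprod T (coef (e p)) (coef (e r)) lam t v) mu d w"
    using assms unfolding left_symmetric_def by blast
  then show ?thesis
    apply (simp add: lprod_def coef_e)
    apply (cases p; cases q; cases r; simp add: algebra_simps)
    done
qed

lemma CP:
  assumes "compatible a b T"
  shows "T p q w lam d - T q p w (-lam-d) d = Wab a b p q w lam d"
proof -
  have "lprod T (coef (e p)) (coef (e q)) lam d w - lprod T (coef (e q)) (coef (e p)) (- lam - d) d w
       = lprod (Wab a b) (coef (e p)) (coef (e q)) lam d w"
    using assms unfolding compatible_def by blast
  then show ?thesis
    by (cases p; cases q; simp add: lprod_def coef_e)
qed
theorem lemma3p3:
  fixes a b c :: complex
    and T :: "gen \<Rightarrow> gen \<Rightarrow> gen \<Rightarrow> complex \<Rightarrow> complex \<Rightarrow> complex"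
  assumes b_nz: "b \<noteq> 0"
    and poly_T: "\<And>u v w. bipoly (T u v w)"
    and lsym: "left_symmetric T"
    and compat: "compatible a b T"
    and sub_L: "\<And>lam d. T GL GL GW lam d = 0"
    and LL: "\<And>lam d. T GL GL GL lam d = d + lam + c"
    and c_nz: "c \<noteq> 0"
    and g2: "\<And>lam d. T GL GW GW lam d = d + a * lam + b + c"
    and h2: "\<And>lam d. T GW GL GW lam d = c"
  shows "((\<forall>lam d. T GW GL GL lam d = 0 \<and> T GL GW GL lam d = 0
                  \<and> T GW GW GL lam d = 0 \<and> T GW GW GW lam d = 0)
          \<and> (\<forall>lam d. T GL GW GW lam d = d + a * lam + b + c \<and> T GW GL GW lam d = c))
       \<or> (a = 1 \<and> c = b \<and>
          (\<exists>dd::complex. dd \<noteq> 0 \<and>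
            (\<forall>lam d. T GL GW GW lam d = d + lam + 2 * b
                   \<and> T GW GL GW lam d = b
                   \<and> T GL GW GL lam d = dd \<and> T GW GL GL lam d = dd
                   \<and> T GW GW GL lam d = - (dd ^ 2 / b)
                   \<and> T GW GW GW lam d = - dd)))"
proof -
  note LS' = LS[OF lsym]
  note CP' = CP[OF compat]
  have Hrel: "T GW GL GL l t = T GL GW GL (-l-t) t" for l t
    using CP'[where p=GL and q=GW and w=GL and lam="-l-t" and d=t] by (simp add: Wab_def)
  have F1: "b * T GL GW GL m t = (t + a*m + b + c) * T GL GW GL 0 t - (t+m+c) * T GL GW GL 0 (t+m)" for m t
    using LS'[where p=GL and q=GL and r=GW and w=GL and lam=0 and mu=m and d=t]
    apply (simp add: sub_L LL g2 h2 Hrel algebra_simps)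
    done
  have F2: "(t + a*l + b) * T GL GW GL 0 t = (t+l+c) * T GL GW GL 0 (t+l)" for l t
    using LS'[where p=GL and q=GW and r=GL and w=GL and lam=l and mu="-l-t" and d=t]
    apply (simp add: sub_L LL g2 h2 Hrel algebra_simps)
    done
  have F3: "b * T GW GW GW m t + c * T GL GW GL 0 (t+m) = 0" for m t
    using LS'[where p=GL and q=GW and r=GW and w=GW and lam=0 and mu=m and d=t]
    apply (simp add: sub_L LL g2 h2 Hrel algebra_simps)
    done
  have F4: "2*b * T GW GW GL m t - T GL GW GL 0 t * T GW GW GW m t + T GL GW GL 0 (t+m) * T GW GL GL m t = 0" for m t
    using LS'[where p=GL and q=GW and r=GW and w=GL and lam=0 and mu=m and d=t]
    apply (simp add: sub_L LL g2 h2 Hrel algebra_simps)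
    done
  have K2c: "T GW GW GW l t = T GW GW GW (-l-t) t" for l t
    using CP'[where p=GW and q=GW and w=GW and lam=l and d=t] by (simp add: Wab_def)
  define d0 where "d0 = T GL GW GL 0 0"
  have K2v: "T GW GW GW m t = - (c / b) * T GL GW GL 0 (t+m)" for m t
    using F3[of m t] b_nz by (simp add: field_simps eq_neg_iff_add_eq_0 add.commute)
  have phic: "T GL GW GL 0 t = d0" for t
  proof -
    have "T GW GW GW 0 t = T GW GW GW (-t) t" using K2c[of 0 t] by simp
    then have "c * T GL GW GL 0 t = c * T GL GW GL 0 0" using K2v[of 0 t] K2v[of "-t" t] b_nz by simp
    then show ?thesis using c_nz d0_def by simp
  qed
  have Gv: "b * T GL GW GL m t = c * d0" for m t
    using F1[of m t] F2[where l=m and t=t] phic by (simp add: algebra_simps)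
  have K2w: "T GW GW GW m t = - (c / b) * d0" for m t using K2v phic by simp
  show ?thesis
  proof (cases "d0 = 0")
    case True
    have G0: "T GL GW GL m t = 0" for m t using Gv[of m t] True b_nz by simp
    have K1: "T GW GW GL m t = 0" for m t
      using F4[of m t] G0 phic True K2w b_nz by simp
    show ?thesis apply (rule disjI1) using G0 Hrel K1 K2w True g2 h2 by simp
  next
    case False
    have cb: "c = b" using Gv[of 0 0] phic[of 0] False by simp
    have a1: "a = 1" using F2[where l=1 and t=0] phic cb False by simp
    have G0: "T GL GW GL m t = d0" for m t using Gv[of m t] cb b_nz by simp
    have K2: "T GW GW GW m t = - d0" for m t using K2w cb b_nz by simp
    have K1: "T GW GW GL m t = - (d0 ^ 2 / b)" for m t
    proof -
      have "d0*(d0*2) + b*(2*T GW GW GL m t) = 0" using F4[of m t] G0 phic K2 Hrel by (simp add: algebra_simps)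
      then have "2*(b*T GW GW GL m t + d0*d0) = 0" by (simp add: algebra_simps)
      then have "b*T GW GW GL m t + d0*d0 = 0" by (metis mult_eq_0_iff zero_neq_numeral)
      then show ?thesis using b_nz by (simp add: field_simps power2_eq_square eq_neg_iff_add_eq_0)
    qed
    show ?thesis apply (rule disjI2) using G0 Hrel K1 K2 False g2 h2 cb a1 by auto
  qed
qed

end
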